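(* For every integer $k\ge 1$, let $\mathcal{F}^2(k)=\gcd\{\sum_{i=1}^k F_{n+i}^2 : n \ge 0\}$. Then $$\mathcal{F}^2(k) = \begin{cases} F_k, & \text{if $k$ is even},\\ 2, & \text{if $k \equiv 3 \pmod{6}$},\\ 1, & \text{if $k \equiv 1,5 \pmod{6}$}.\end{cases}$$
   Context: $(F_n)$ is the Fibonacci sequence: $F_0=0$, $F_1=1$, $F_n=F_{n-1}+F_{n-2}$. *)

theory Defs
  imports "HOL-Number_Theory.Fib"
begin

definition fib_sq_gcd :: "nat \<Rightarrow> nat" where
  "fib_sq_gcd k = Gcd {(\<Sum>i=1..k. (fib (n + i))^2) | n. True}"

end

theory Submission
  imports Defs
begin

lemma sumsq: "(\<Sum>i=1..k. (fib (n + i))^2) + fib n * fib (Suc n) = fib (n + k) * fib (Suc (n + k))"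
proof (induction k)
  case 0 then show ?case by simp
next
  case (Suc k)
  have "(\<Sum>i=1..Suc k. (fib (n + i))^2) = (\<Sum>i=1..k. (fib (n + i))^2) + (fib (Suc (n + k)))^2"
    by simp
  then have "(\<Sum>i=1..Suc k. (fib (n + i))^2) + fib n * fib (Suc n)
      = fib (n + k) * fib (Suc (n + k)) + (fib (Suc (n + k)))^2" using Suc by simp
  also have "\<dots> = fib (n + Suc k) * fib (Suc (n + Suc k))"
    by (simp add: power2_eq_square algebra_simps)
  finally show ?case .
qed

definition SS :: "nat \<Rightarrow> nat \<Rightarrow> nat" where
  "SS k n = (\<Sum>i=1..k. (fib (n + i))^2)"

lemma SS_int: "int (SS k n) = int (fib (n + k)) * int (fib (Suc (n + k))) - int (fib n) * int (fib (Suc n))"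
proof -
  have "int (SS k n) + int (fib n) * int (fib (Suc n)) = int (fib (n + k)) * int (fib (Suc (n + k)))"
    using arg_cong[OF sumsq[where k=k and n=n], of int] unfolding SS_def by simp
  then show ?thesis by linarith
qed

lemma SS_expand:
  fixes m n :: nat
  defines "a \<equiv> int (fib m)" and "b \<equiv> int (fib (Suc m))"
  defines "f0 \<equiv> int (fib n)" and "f1 \<equiv> int (fib (Suc n))" and "f2 \<equiv> int (fib (Suc (Suc n)))"
  shows "int (SS (Suc m) n) = b * (b*f1*f2 + a*f1^2 + a*f0*f2 + (b-a)*f0*f1) + (a^2+a*b-b^2-1)*f0*f1"
proof -
  have e1: "fib (n + Suc m) = fib (Suc m) * fib (Suc n) + fib m * fib n"
    using fib_add[of n m] by simp
  have e2: "fib (Suc (n + Suc m)) = fib (Suc m) * fib (Suc (Suc n)) + fib m * fib (Suc n)"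
    using fib_add[of "Suc n" m] by simp
  have "int (SS (Suc m) n) = (b*f1 + a*f0) * (b*f2 + a*f1) - f0*f1"
    unfolding SS_int e1 e2 a_def b_def f0_def f1_def f2_def by simp
  also have "\<dots> = b * (b*f1*f2 + a*f1^2 + a*f0*f2 + (b-a)*f0*f1) + (a^2+a*b-b^2-1)*f0*f1"
    by (simp add: power2_eq_square algebra_simps)
  finally show ?thesis .
qed

lemma cassini': "(int (fib m))^2 + int (fib m) * int (fib (Suc m)) - (int (fib (Suc m)))^2 = - ((-1)^m)"
proof -
  have "int (fib (Suc (Suc m)) * fib m) - int((fib (Suc m))\<^sup>2) = - ((-1)^m)"
    by (rule fib_Cassini_int)
  then show ?thesis by (simp add: power2_eq_square algebra_simps)
qed

lemma fib_even_iff: "even (fib n) \<longleftrightarrow> 3 dvd n"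
proof (induction n rule: less_induct)
  case (less n)
  show ?case
  proof (cases "n < 3")
    case True
    then have "n = 0 \<or> n = 1 \<or> n = 2" by auto
    then show ?thesis by (elim disjE) auto
  next
    case False
    then obtain j where j: "n = j + 3" by (metis add.commute le_Suc_ex not_less)
    have "fib (j + 3) = 2 * fib (j + 1) + fib j"
      by (simp add: numeral_3_eq_3 numeral_2_eq_2)
    then have "even (fib n) \<longleftrightarrow> even (fib j)" using j by simp
    also have "\<dots> \<longleftrightarrow> 3 dvd j" using less j by simp
    also have "\<dots> \<longleftrightarrow> 3 dvd n" using j by presburger
    finally show ?thesis .
  qed
qed

lemma S012:
  fixes m :: nat
  defines "a \<equiv> int (fib m)" and "b \<equiv> int (fib (Suc m))"
  shows "int (SS (Suc m) 0) = b * (a + b)"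
    and "int (SS (Suc m) 1) = (a + b) * (a + 2*b) - 1"
    and "int (SS (Suc m) 2) = (a + 2*b) * (2*a + 3*b) - 2"
proof -
  have f2: "int (fib (Suc (Suc m))) = a + b" unfolding a_def b_def by simp
  have f3: "int (fib (Suc (Suc (Suc m)))) = a + 2*b" unfolding a_def b_def by simp
  have f4: "int (fib (Suc (Suc (Suc (Suc m))))) = 2*a + 3*b" unfolding a_def b_def by simp
  show "int (SS (Suc m) 0) = b * (a + b)" using SS_int[of "Suc m" 0] f2 b_def by simp
  show "int (SS (Suc m) 1) = (a + b) * (a + 2*b) - 1" using SS_int[of "Suc m" 1] f2 f3 by (simp add: algebra_simps a_def b_def)
  show "int (SS (Suc m) 2) = (a + 2*b) * (2*a + 3*b) - 2"
    using SS_int[of "Suc m" 2] f3 f4 by (simp add: numeral_2_eq_2)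
qed

theorem theorem5p2:
  fixes k :: nat
  assumes "k \<ge> 1"
  shows "(even k \<longrightarrow> fib_sq_gcd k = fib k)
       \<and> (k mod 6 = 3 \<longrightarrow> fib_sq_gcd k = 2)
       \<and> ((k mod 6 = 1 \<or> k mod 6 = 5) \<longrightarrow> fib_sq_gcd k = 1)"
proof -
  obtain m where km: "k = Suc m" using assms by (cases k) auto
  define g where "g = fib_sq_gcd k"
  define a where "a = int (fib m)"
  define b where "b = int (fib (Suc m))"
  have gdvd: "g dvd SS k n" for n
    unfolding g_def fib_sq_gcd_def SS_def by (rule Gcd_dvd) blast
  have ggr: "d dvd g" if "\<And>n. d dvd SS k n" for d
    unfolding g_def fib_sq_gcd_def using that unfolding SS_def
    by (intro Gcd_greatest) blast
  have gi: "int g dvd int (SS k n)" for n using gdvd by simp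
  have s0: "int (SS k 0) = b * (a + b)" and s1: "int (SS k 1) = (a + b) * (a + 2*b) - 1"
    and s2: "int (SS k 2) = (a + 2*b) * (2*a + 3*b) - 2"
    using S012[of m] unfolding km a_def b_def by auto
  have cas: "a^2 + a*b - b^2 = - ((-1)^m)" unfolding a_def b_def by (rule cassini')
  have exp: "\<exists>X. int (SS k n) = b * X + (a^2+a*b-b^2-1) * (int (fib n) * int (fib (Suc n)))" for n
    using SS_expand[of m n] unfolding km a_def b_def by (metis mult.assoc)
  have part1: "fib_sq_gcd k = fib k" if ev: "even k"
  proof -
    have om: "odd m" using ev km by simp
    then have c1: "a^2 + a*b - b^2 = 1" using cas by simp
    have "b = (a + 2*b) * int (SS k 0) - b * int (SS k 1)"
    proof -
      show ?thesis
        unfolding s0 s1 by (simp add: algebra_simps)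
    qed
    then have "int g dvd b" using gi[of 0] gi[of 1] by (metis dvd_diff dvd_mult)
    then have A: "g dvd fib k" unfolding b_def km by simp
    have "int (fib k) dvd int (SS k n)" for n
    proof -
      obtain X where "int (SS k n) = b * X + (a^2+a*b-b^2-1) * (int (fib n) * int (fib (Suc n)))"
        using exp by blast
      then have "int (SS k n) = b * X" using c1 by simp
      then show ?thesis unfolding b_def km by simp
    qed
    then have "fib k dvd g" using ggr by (metis of_nat_dvd_iff)
    with A show ?thesis unfolding g_def by (simp add: dvd_antisym)
  qed
  have two: "g dvd 2" if od: "odd k"
  proof -
    have em: "even m" using od km by simp
    then have c1: "a^2 + a*b - b^2 = -1" using cas by simp
    have "2 = int (SS k 0) - 3 * int (SS k 1) + int (SS k 2)"
    proof -
      have "int (SS k 0) - 3 * int (SS k 1) + int (SS k 2) = 1 - (a^2 + a*b - b^2)"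
        unfolding s0 s1 s2 by (simp add: power2_eq_square algebra_simps)
      then show ?thesis using c1 by simp
    qed
    then have "int g dvd 2" using gi[of 0] gi[of 1] gi[of 2]
      by (metis dvd_add dvd_diff dvd_mult)
    then show ?thesis by (metis of_nat_dvd_iff of_nat_numeral)
  qed
  have part2: "fib_sq_gcd k = 2" if k3: "k mod 6 = 3"
  proof -
    have od: "odd k" using k3 by presburger
    have em: "even m" using od km by simp
    then have c1: "a^2 + a*b - b^2 = -1" using cas by simp
    have "even (fib k)" using k3 fib_even_iff by presburger
    then have eb: "even b" unfolding b_def km by simp
    have "2 dvd int (SS k n)" for n
    proof -
      obtain X where "int (SS k n) = b * X + (a^2+a*b-b^2-1) * (int (fib n) * int (fib (Suc n)))"
        using exp by blast
      then have "int (SS k n) = b * X + 2 * (- (int (fib n) * int (fib (Suc n))))" using c1 by simp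
      then show ?thesis using eb by simp
    qed
    then have "2 dvd g" using ggr by (metis of_nat_dvd_iff of_nat_numeral)
    with two[OF od] show ?thesis unfolding g_def by (simp add: dvd_antisym)
  qed
  have part3: "fib_sq_gcd k = 1" if k15: "k mod 6 = 1 \<or> k mod 6 = 5"
  proof -
    have od: "odd k" using k15 by presburger
    have "\<not> 3 dvd k" using k15 by presburger
    then have "odd (fib k)" using fib_even_iff by simp
    then have ob: "odd b" unfolding b_def km by simp
    have em: "even m" using od km by simp
    then have c1: "a^2 + a*b - b^2 = -1" using cas by simp
    have "int (SS k 1) = 2 * (a*b + b*b - 1) + b * b + (a^2 + a*b - b^2 + 1)"
      unfolding s1 by (simp add: power2_eq_square algebra_simps)
    then have "int (SS k 1) = 2 * (a*b + b*b - 1) + b * b" using c1 by simp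
    then have "odd (int (SS k 1))" using ob by simp
    then have "odd g" using gi[of 1] by (metis dvd_trans even_of_nat_iff)
    moreover have "g \<le> 2" using two[OF od] by (simp add: dvd_imp_le)
    ultimately have "g = 1" by presburger
    then show ?thesis unfolding g_def .
  qed
  show ?thesis using part1 part2 part3 by blast
qed

end
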